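(* Let $X$ be a finite-dimensional real Banach space such that each $x\in S_X$ is $\varepsilon_x$-smooth for some $\varepsilon_x\in[0,2)$ (depending on $x$). Then $X$ is approximately smooth, i.e. there exists $\varepsilon\in[0,2)$ such that every $x\in S_X$ is $\varepsilon$-smooth.
   Context: For $x\in X\setminus\{\theta\}$, $J(x)=\{f\in S_{X^*}: f(x)=\|x\|\}$ (supporting functionals), and $x$ is $\varepsilon$-smooth if $\operatorname{diam}J(x)=\sup_{f,g\in J(x)}\|f-g\|\le\varepsilon$. $S_X$ is the unit sphere of $X$. *)

theory Defs
  imports "HOL-Analysis.Analysis"
begin

definition supp_funcs :: "'a::real_normed_vector \<Rightarrow> ('a \<Rightarrow>\<^sub>L real) set" where
  "supp_funcs x = {f. norm f = 1 \<and> blinfun_apply f x = norm x}"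

definition eps_smooth :: "real \<Rightarrow> 'a::real_normed_vector \<Rightarrow> bool" where
  "eps_smooth e x \<longleftrightarrow> x \<noteq> 0 \<and> diameter (supp_funcs x) \<le> e"

end

theory Submission imports Defs begin

lemma compact_box:
  fixes B :: "'b set" and r :: real
  shows "compact (PiE UNIV (\<lambda>v. if v \<in> B then {-r..r} else {0}) :: ('b \<Rightarrow> real) set)"
proof -
  have "compactin (product_topology (\<lambda>i. euclidean) UNIV)
          (PiE UNIV (\<lambda>v. if v \<in> B then {-r..r} else {0}) :: ('b \<Rightarrow> real) set)"
    by (subst compactin_PiE) auto
  then show ?thesis by (simp add: euclidean_product_topology)
qed

lemma lower_bound:
  fixes B :: "'b::real_normed_vector set"
  assumes "finite B" "independent B"
  shows "\<exists>m>0. \<forall>u. m * (\<Sum>v\<in>B. \<bar>u v\<bar>) \<le> norm (\<Sum>v\<in>B. u v *\<^sub>R v)"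
proof -
  define S1 where "S1 = (PiE UNIV (\<lambda>v. if v \<in> B then {-1..1} else {0}) :: ('b \<Rightarrow> real) set)
      \<inter> {u. (\<Sum>v\<in>B. \<bar>u v\<bar>) = 1}"
  have cS1: "compact S1" unfolding S1_def
    by (intro compact_Int_closed compact_box closed_Collect_eq) (intro continuous_intros; auto)+
  have key: "m * (\<Sum>v\<in>B. \<bar>u v\<bar>) \<le> norm (\<Sum>v\<in>B. u v *\<^sub>R v)"
    if m: "\<forall>w\<in>S1. m \<le> norm (\<Sum>v\<in>B. w v *\<^sub>R v)" for m u
  proof (cases "(\<Sum>v\<in>B. \<bar>u v\<bar>) = 0")
    case True then show ?thesis by simp
  next
    case False
    define s where "s = (\<Sum>v\<in>B. \<bar>u v\<bar>)"
    have s0: "s > 0" using False s_def by (metis abs_ge_zero order_less_le sum_nonneg)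
    define w where "w = (\<lambda>v. if v \<in> B then u v / s else 0)"
    have le: "\<bar>u v\<bar> \<le> s" if "v \<in> B" for v
      unfolding s_def using that assms(1) by (intro member_le_sum) auto
    have "w \<in> S1" unfolding S1_def
    proof
      show "w \<in> PiE UNIV (\<lambda>v. if v \<in> B then {-1..1} else {0})"
        using le s0 by (auto simp: w_def PiE_iff abs_le_iff divide_le_eq le_divide_eq) (metis minus_le_iff)
      have "(\<Sum>v\<in>B. \<bar>w v\<bar>) = (\<Sum>v\<in>B. \<bar>u v\<bar> / s)"
        using s0 by (intro sum.cong) (auto simp: w_def)
      also have "\<dots> = 1" using s0 by (simp add: sum_divide_distrib[symmetric] s_def)
      finally show "w \<in> {u. (\<Sum>v\<in>B. \<bar>u v\<bar>) = 1}" by simp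
    qed
    then have "m \<le> norm (\<Sum>v\<in>B. w v *\<^sub>R v)" using m by blast
    also have "(\<Sum>v\<in>B. w v *\<^sub>R v) = (1/s) *\<^sub>R (\<Sum>v\<in>B. u v *\<^sub>R v)"
      by (simp add: scaleR_sum_right w_def)
    also have "norm \<dots> = norm (\<Sum>v\<in>B. u v *\<^sub>R v) / s" using s0 by simp
    finally show ?thesis using s0 by (simp add: s_def[symmetric] le_divide_eq mult.commute)
  qed
  show ?thesis
  proof (cases "S1 = {}")
    case True then show ?thesis using key[of 1] by (intro exI[of _ 1]) auto
  next
    case False
    have "continuous_on S1 (\<lambda>w. norm (\<Sum>v\<in>B. w v *\<^sub>R v))"
      by (intro continuous_intros) (auto intro: continuous_on_subset[OF continuous_on_product_coordinates])
    then obtain w0 where w0: "w0 \<in> S1" "\<forall>w\<in>S1. norm (\<Sum>v\<in>B. w0 v *\<^sub>R v) \<le> norm (\<Sum>v\<in>B. w v *\<^sub>R v)"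
      using continuous_attains_inf[OF cS1 False] by blast
    have "\<exists>v\<in>B. w0 v \<noteq> 0"
    proof (rule ccontr)
      assume "\<not> ?thesis"
      then have "(\<Sum>v\<in>B. \<bar>w0 v\<bar>) = 0" by simp
      with w0(1) show False by (simp add: S1_def)
    qed
    then have "(\<Sum>v\<in>B. w0 v *\<^sub>R v) \<noteq> 0"
      using assms dependent_finite by blast
    then show ?thesis using key w0(2) by (intro exI[of _ "norm (\<Sum>v\<in>B. w0 v *\<^sub>R v)"]) auto
  qed
qed

lemma fd_basis:
  fixes V :: "'b::real_normed_vector set"
  assumes "finite V" "span V = UNIV"
  obtains B :: "'b set" where "finite B" "independent B" "span B = UNIV"
proof -
  obtain B :: "'b set" where B: "B \<subseteq> V" "independent B" "V \<subseteq> span B"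
    using maximal_independent_subset[of V] by blast
  have "span V \<subseteq> span B" using span_mono[OF B(3)] by (simp add: span_span)
  then have "span B = UNIV" using assms(2) by auto
  moreover have "finite B" using B(1) assms(1) by (rule finite_subset)
  ultimately show ?thesis using that B(2) by blast
qed

lemma fd_repr:
  fixes B :: "'b::real_normed_vector set"
  assumes "finite B" "span B = UNIV"
  shows "\<exists>u. (\<forall>v. v \<notin> B \<longrightarrow> u v = 0) \<and> x = (\<Sum>v\<in>B. u v *\<^sub>R v)"
proof -
  have "x \<in> span B" using assms(2) by simp
  then obtain u where u: "x = (\<Sum>v\<in>B. u v *\<^sub>R v)"
    unfolding span_finite[OF assms(1)] by blast
  have "(\<Sum>v\<in>B. (if v \<in> B then u v else 0) *\<^sub>R v) = (\<Sum>v\<in>B. u v *\<^sub>R v)"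
    by (rule sum.cong) simp_all
  then show ?thesis using u
    by (intro exI[of _ "\<lambda>v. if v \<in> B then u v else 0"]) simp
qed


lemma fd_compact_cball:
  fixes V :: "'b::real_normed_vector set"
  assumes "finite V" "span V = UNIV"
  shows "compact (cball (0::'b) 1)"
proof -
  obtain B :: "'b set" where B: "finite B" "independent B" "span B = UNIV"
    using fd_basis[OF assms(1,2)] by blast
  obtain m where m: "m > 0" "\<And>u. m * (\<Sum>v\<in>B. \<bar>u v\<bar>) \<le> norm (\<Sum>v\<in>B. u v *\<^sub>R v)"
    using lower_bound[OF B(1,2)] by blast
  define K where "K = (PiE UNIV (\<lambda>v. if v \<in> B then {-(1/m)..1/m} else {0}) :: ('b \<Rightarrow> real) set)"
  define F where "F = (\<lambda>u::'b \<Rightarrow> real. \<Sum>v\<in>B. u v *\<^sub>R v)"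
  have "compact (F ` K)" unfolding K_def F_def
    by (intro compact_continuous_image compact_box)
      (intro continuous_intros; auto intro: continuous_on_subset[OF continuous_on_product_coordinates])
  moreover have "cball 0 1 \<subseteq> F ` K"
  proof
    fix x :: 'b assume x: "x \<in> cball 0 1"
    obtain u where u: "\<forall>v. v \<notin> B \<longrightarrow> u v = 0" "x = (\<Sum>v\<in>B. u v *\<^sub>R v)"
      using fd_repr[OF B(1,3)] by blast
    have "m * (\<Sum>v\<in>B. \<bar>u v\<bar>) \<le> 1" using m(2)[of u] u(2) x by simp
    then have s: "(\<Sum>v\<in>B. \<bar>u v\<bar>) \<le> 1/m" using m(1) by (simp add: le_divide_eq mult.commute)
    have "\<bar>u v\<bar> \<le> 1/m" if "v \<in> B" for v
      using member_le_sum[of v B "\<lambda>v. \<bar>u v\<bar>"] that B(1) s by auto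
    then have "u \<in> K" using u(1) by (auto simp: K_def PiE_iff abs_le_iff) (metis minus_le_iff)
    then show "x \<in> F ` K" using u(2) by (auto simp: F_def)
  qed
  ultimately have "compact (F ` K \<inter> cball 0 1)" by (intro compact_Int_closed) auto
  moreover have "F ` K \<inter> cball 0 1 = cball 0 1" using \<open>cball 0 1 \<subseteq> F ` K\<close> by blast
  ultimately show ?thesis by simp
qed

lemma closed_sphere_gen: "closed (sphere (a::'b::metric_space) r)"
  unfolding sphere_def by (intro closed_Collect_eq continuous_intros)

lemma fd_compact_sphere:
  fixes V :: "'b::real_normed_vector set"
  assumes "finite V" "span V = UNIV"
  shows "compact (sphere (0::'b) 1)"
proof -
  have "compact (cball (0::'b) 1 \<inter> sphere 0 1)"
    by (intro compact_Int_closed fd_compact_cball[OF assms] closed_sphere_gen)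
  moreover have "cball (0::'b) 1 \<inter> sphere 0 1 = sphere 0 1" by auto
  ultimately show ?thesis by simp
qed

lemma fd_linear_bounded:
  fixes V :: "'b::real_normed_vector set" and f :: "'b \<Rightarrow> 'c::real_normed_vector"
  assumes "finite V" "span V = UNIV" "linear f"
  shows "bounded_linear f"
proof -
  obtain B :: "'b set" where B: "finite B" "independent B" "span B = UNIV"
    using fd_basis[OF assms(1,2)] by blast
  obtain m where m: "m > 0" "\<And>u. m * (\<Sum>v\<in>B. \<bar>u v\<bar>) \<le> norm (\<Sum>v\<in>B. u v *\<^sub>R v)"
    using lower_bound[OF B(1,2)] by blast
  define M where "M = (\<Sum>v\<in>B. norm (f v))"
  have M0: "M \<ge> 0" unfolding M_def by (simp add: sum_nonneg)
  have bd: "norm (f x) \<le> norm x * (M / m)" for x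
  proof -
    obtain u where u: "\<forall>v. v \<notin> B \<longrightarrow> u v = 0" "x = (\<Sum>v\<in>B. u v *\<^sub>R v)"
      using fd_repr[OF B(1,3)] by blast
    have "f x = (\<Sum>v\<in>B. f (u v *\<^sub>R v))" unfolding u(2)
      using linear_sum[OF assms(3)] by (simp add: o_def)
    also have "\<dots> = (\<Sum>v\<in>B. u v *\<^sub>R f v)"
      using linear_scale[OF assms(3)] by simp
    finally have fx: "f x = (\<Sum>v\<in>B. u v *\<^sub>R f v)" .
    have "norm (f x) \<le> (\<Sum>v\<in>B. norm (u v *\<^sub>R f v))" unfolding fx by (rule norm_sum)
    also have "\<dots> = (\<Sum>v\<in>B. \<bar>u v\<bar> * norm (f v))" by simp
    also have "\<dots> \<le> (\<Sum>v\<in>B. (\<Sum>w\<in>B. \<bar>u w\<bar>) * norm (f v))"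
      using B(1) by (intro sum_mono mult_right_mono member_le_sum) auto
    also have "\<dots> = (\<Sum>w\<in>B. \<bar>u w\<bar>) * M" by (simp add: M_def sum_distrib_left)
    also have "\<dots> \<le> (norm x / m) * M"
      using m(2)[of u] u(2) m(1) M0 by (intro mult_right_mono) (auto simp: le_divide_eq mult.commute)
    finally show ?thesis by simp
  qed
  show ?thesis using assms(3) bd
    by (intro bounded_linear_intro[where K="M/m"]) (auto simp: linear_add linear_scale)
qed


lemma dual_fd:
  fixes V :: "'b::real_normed_vector set"
  assumes "finite V" "span V = UNIV"
  shows "\<exists>D :: ('b \<Rightarrow>\<^sub>L real) set. finite D \<and> span D = UNIV"
proof -
  obtain B :: "'b set" where B: "finite B" "independent B" "span B = UNIV"
    using fd_basis[OF assms(1,2)] by blast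
  have lin: "linear (\<lambda>x. representation B x w)" for w
  proof (rule linearI)
    fix x y :: 'b and r :: real
    show "representation B (x + y) w = representation B x w + representation B y w"
      using representation_add[OF B(2), of y x] B(3) by simp
    show "representation B (r *\<^sub>R x) w = r *\<^sub>R representation B x w"
      using representation_scale[OF B(2), of x r] B(3) by simp
  qed
  have bl: "bounded_linear (\<lambda>x. representation B x w)" for w
    by (rule fd_linear_bounded[OF assms lin])
  define c where "c = (\<lambda>w. Blinfun (\<lambda>x. representation B x w))"
  have capp: "blinfun_apply (c w) x = representation B x w" for w x
    unfolding c_def using bl[of w] by (simp add: bounded_linear_Blinfun_apply)
  have "f \<in> span (c ` B)" for f :: "'b \<Rightarrow>\<^sub>L real"
  proof -
    have "f = (\<Sum>w\<in>B. blinfun_apply f w *\<^sub>R c w)"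
    proof (rule blinfun_eqI)
      fix x
      have "x = (\<Sum>w\<in>B. representation B x w *\<^sub>R w)"
        using real_vector.sum_representation_eq[OF B(2) _ B(1) order_refl, of x] B(3) by simp
      then have "blinfun_apply f x = blinfun_apply f (\<Sum>w\<in>B. representation B x w *\<^sub>R w)"
        by (rule arg_cong)
      also have "\<dots> = (\<Sum>w\<in>B. representation B x w * blinfun_apply f w)"
        by (simp add: blinfun.sum_right blinfun.scaleR_right)
      also have "\<dots> = blinfun_apply (\<Sum>w\<in>B. blinfun_apply f w *\<^sub>R c w) x"
        by (simp add: blinfun.sum_left capp mult.commute blinfun.scaleR_left)
      finally show "blinfun_apply f x = blinfun_apply (\<Sum>w\<in>B. blinfun_apply f w *\<^sub>R c w) x" .
    qed
    also have "\<dots> \<in> span (c ` B)"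
      by (intro span_sum span_scale span_base) auto
    finally show ?thesis .
  qed
  then show ?thesis using B(1) by (intro exI[of _ "c ` B"]) auto
qed

theorem theorem2p6:
  fixes X_witness :: "'a::banach itself"
  assumes fin_dim: "\<exists>B :: 'a set. finite B \<and> span B = UNIV"
    and pointwise: "\<forall>x::'a \<in> sphere 0 1. \<exists>e. 0 \<le> e \<and> e < 2 \<and> eps_smooth e x"
  shows "\<exists>e. 0 \<le> e \<and> e < 2 \<and> (\<forall>x::'a \<in> sphere 0 1. eps_smooth e x)"
proof -
  obtain V :: "'a set" where V: "finite V" "span V = UNIV" using fin_dim by blast
  obtain W :: "('a \<Rightarrow>\<^sub>L real) set" where W: "finite W" "span W = UNIV"
    using dual_fd[OF V] by blast
  define S where "S = sphere (0::'a) 1"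
  define Ds where "Ds = sphere (0::'a \<Rightarrow>\<^sub>L real) 1"
  define K where "K = (S \<times> (Ds \<times> Ds)) \<inter> {p. blinfun_apply (fst (snd p)) (fst p) = 1}
      \<inter> {p. blinfun_apply (snd (snd p)) (fst p) = 1}"
  have cK: "compact K" unfolding K_def S_def Ds_def
    by (intro compact_Int_closed compact_Times fd_compact_sphere[OF V] fd_compact_sphere[OF W]
        closed_Collect_eq continuous_intros)
  have inK: "(x, f, g) \<in> K" if "x \<in> S" "f \<in> supp_funcs x" "g \<in> supp_funcs x" for x f g
    using that by (simp add: K_def S_def Ds_def supp_funcs_def)
  have bsupp: "bounded (supp_funcs x)" for x :: 'a
    by (rule bounded_subset[OF bounded_cball[of 0 1]]) (auto simp: supp_funcs_def)
  have nz: "x \<noteq> 0" if "x \<in> S" for x using that by (auto simp: S_def)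
  show ?thesis
  proof (cases "K = {}")
    case True
    have "supp_funcs x = {}" if "x \<in> S" for x using inK[OF that] True by blast
    then show ?thesis using nz
      by (intro exI[of _ 0]) (auto simp: eps_smooth_def S_def diameter_def)
  next
    case False
    have "continuous_on K (\<lambda>p. dist (fst (snd p)) (snd (snd p)))"
      by (intro continuous_intros)
    then obtain p0 where p0: "p0 \<in> K" "\<forall>p\<in>K. dist (fst (snd p)) (snd (snd p)) \<le> dist (fst (snd p0)) (snd (snd p0))"
      using continuous_attains_sup[OF cK False] by blast
    obtain x0 f0 g0 where pe: "p0 = (x0, f0, g0)" by (metis prod.collapse)
    have x0: "x0 \<in> S" and f0: "f0 \<in> supp_funcs x0" and g0: "g0 \<in> supp_funcs x0"
      using p0(1) by (auto simp: pe K_def S_def Ds_def supp_funcs_def)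
    obtain e0 where e0: "e0 < 2" "eps_smooth e0 x0" using pointwise x0 S_def by blast
    have "dist f0 g0 \<le> diameter (supp_funcs x0)" by (rule diameter_bounded_bound[OF bsupp f0 g0])
    also have "\<dots> \<le> e0" using e0(2) by (simp add: eps_smooth_def)
    finally have lt2: "dist f0 g0 < 2" using e0(1) by simp
    have "eps_smooth (dist f0 g0) x" if "x \<in> S" for x
    proof -
      have "diameter (supp_funcs x) \<le> dist f0 g0"
      proof (rule diameter_le)
        show "supp_funcs x \<noteq> {} \<or> 0 \<le> dist f0 g0" by simp
        fix f g assume "f \<in> supp_funcs x" "g \<in> supp_funcs x"
        then have "(x, f, g) \<in> K" using inK that by blast
        then show "norm (f - g) \<le> dist f0 g0" using p0(2) by (force simp: pe dist_norm)
      qed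
      then show ?thesis using nz[OF that] by (simp add: eps_smooth_def)
    qed
    then show ?thesis using lt2 by (intro exI[of _ "dist f0 g0"]) (auto simp: S_def)
  qed
qed

end
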